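(* Let $(H,T)$ be a coupling time with ambiguities of finite width for the interacting particle system described in the context, and assume that $\Lambda_T(\lambda)=\mathbb{E}[e^{-\lambda T}]$ is finite for some $\lambda>0$. Then $\Lambda_H(\lambda')$ is finite for every $\lambda'<\lambda$.
   Context: Let $S$ be a finite set and $\mathfrak{J}$ a finite index set; for each $i\in\mathfrak{J}$ fix a finite $A_i\subset\mathbb{Z}$, $\ell_i\subset S^{A_i}$, $s_i\in S$, $r_i\ge0$. Graphical construction: on $(\Omega,\mathcal{F},\mathbb{P})$, independent Poisson processes $\Psi(x,i)$ on $(-\infty,0)$ with rates $r_i$, points $0>\Psi(x,i,1)>\Psi(x,i,2)>\cdots$; $\mathcal{F}(x,i)=\sigma(\Psi(x,i))$. Starting from $\xi\in S^{\mathbb{Z}}$ at time $u<0$, at each point $t=\Psi(x,i,k)>u$, if the configuration just before $t$ restricted to $x+A_i$ lies in $\ell_i$ (always if $A_i=\emptyset$), site $x$ is set to $s_i$ (the point is "performed"). $\Phi(\xi,u,0^-,0)$ is the state of site $0$ just before time $0$; $\mathrm{Perf}(\xi,u,x,i,k)$ indicates whether $\Psi(x,i,k)$ is performed. For a random time $U\le0$, $\mathcal{F}^+(U)$ is generated by the numbers of points of each $\Psi(x,i)$ in $[U,0)$ and their positions. A coupling time with ambiguities is a pair $(H,T)$ ($H=\{H(x,i,k)\}$ $\{0,1\}$-valued, $T$ real) with: (1) $T\in(-\infty,0)$ a.s.; (2) a.s. finitely many $H(x,i,k)\ne0$; (3) a.s. $H(x,i,k)=0$ if $\Psi(x,i,k)<T$;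 (4) $H(x,i,k)$ is $\mathcal{F}^+(\Psi(x,i,k))$-measurable; (5) a.s., for all $t<T$ and $\xi,\xi'$, equality of $\mathrm{Perf}(\cdot,t,x,i,k)H(x,i,k)$ for all $(x,i,k)$ implies $\Phi(\xi,t,0^-,0)=\Phi(\xi',t,0^-,0)$. Its width is bounded by nonnegative integers $(a_-,a_+)$ if: (i) $H$ is measurable w.r.t. $\sigma(\mathcal{F}(x,i);-a_-\le x\le a_+,i\in\mathfrak{J})$; (ii) a.s., $H(x,i,k)=1$ implies $x+A_i\subset[-a_-,a_+]$; (iii) there is a map $\Theta$ on $\Omega\times\{0,1\}^{\mathbb{Z}\times\mathfrak{J}\times\{1,2,\dots\}}$ with values in $S$, measurable w.r.t. $\sigma(\mathcal{F}(x,i);-a_-\le x\le a_+)\otimes$(product $\sigma$-algebra), with $\Phi(\xi,t,0^-,0)=\Theta(\Psi,(\mathrm{Perf}(\xi,t,x,i,k)H(x,i,k))_{x,i,k})$ a.s. for all $t<T$, $\xi$. Finite width means bounded by some such pair. $\Lambda_H(\lambda)=\mathbb{E}[\sum_{x,i,k}(\#A_i)e^{-\lambda\Psi(x,i,k)}H(x,i,k)]$. *)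

theory Defs
  imports "HOL-Probability.Probability"
begin

text \<open>For a process of rate r i > 0 the points are
  Psi(x,i,k) = -(G(x,i,0)+...+G(x,i,k)) with independent Exp(r i) gaps G; k = 0,1,2,...
  corresponds to the paper's k = 1,2,3,...  A process of rate 0 has no points; its
  (non-existent) points are encoded as -infinity.\<close>

definition pts :: "('j \<Rightarrow> real) \<Rightarrow> ('w \<Rightarrow> int \<Rightarrow> 'j \<Rightarrow> nat \<Rightarrow> real) \<Rightarrow> 'w \<Rightarrow> int \<Rightarrow> 'j \<Rightarrow> nat \<Rightarrow> ereal" where
  "pts r G w x i k = (if r i = 0 then MInfty else ereal (- (\<Sum>m\<le>k. G w x i m)))"

definition poisson_family :: "'w measure \<Rightarrow> ('j \<Rightarrow> real) \<Rightarrow> ('w \<Rightarrow> int \<Rightarrow> 'j \<Rightarrow> nat \<Rightarrow> real) \<Rightarrow> bool" where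
  "poisson_family M r G \<longleftrightarrow>
     prob_space.indep_vars M (\<lambda>_. borel) (\<lambda>(x,i,k) w. G w x i k) {(x,i,k). r i > 0} \<and>
     (\<forall>x i k. r i > 0 \<longrightarrow> distributed M lborel (\<lambda>w. G w x i k) (exponential_density (r i)))"

text \<open>Space-time history of the graphical construction started from xi at time u
  (for one fixed realisation Psi of the point processes): zeta y t is the state of site y
  just before time t, for u < t \<le> 0.\<close>

definition consistent ::
  "('j \<Rightarrow> int set) \<Rightarrow> ('j \<Rightarrow> (int \<Rightarrow> 's) set) \<Rightarrow> ('j \<Rightarrow> 's) \<Rightarrow> (int \<Rightarrow> 'j \<Rightarrow> nat \<Rightarrow> ereal)
    \<Rightarrow> (int \<Rightarrow> 's) \<Rightarrow> real \<Rightarrow> (int \<Rightarrow> real \<Rightarrow> 's) \<Rightarrow> bool" where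
  "consistent A ell s P xi u zeta \<longleftrightarrow>
     (\<forall>y t. (t \<le> u \<or> 0 < t) \<longrightarrow> zeta y t = xi y) \<and>
     (\<forall>y t. u < t \<and> t \<le> 0 \<longrightarrow>
        (let Q = {(i,k). ereal u < P y i k \<and> P y i k < ereal t} in
          (Q = {} \<longrightarrow> zeta y t = xi y) \<and>
          (\<forall>(i,k)\<in>Q. (\<forall>(i',k')\<in>Q. (i',k') \<noteq> (i,k) \<longrightarrow> P y i' k' < P y i k) \<longrightarrow>
             zeta y t =
               (if A i = {} \<or> restrict (\<lambda>a. zeta (y + a) (real_of_ereal (P y i k))) (A i) \<in> ell i
                then s i else zeta y (real_of_ereal (P y i k))))))"

definition hist where
  "hist A ell s P xi u = (THE zeta. consistent A ell s P xi u zeta)"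

text \<open>Phi(xi,u,0^-,0): state of site 0 just before time 0.\<close>
definition Phi where
  "Phi A ell s P xi u = hist A ell s P xi u 0 0"

definition Perf where
  "Perf A ell s P xi u x i k \<longleftrightarrow>
     ereal u < P x i k \<and> P x i k < 0 \<and>
     (A i = {} \<or> restrict (\<lambda>a. hist A ell s P xi u (x + a) (real_of_ereal (P x i k))) (A i) \<in> ell i)"

text \<open>F^+(U): generated by the numbers and positions of the points in [U,0) of every
  process (points outside [U,0) are replaced by -infinity).\<close>
definition Fplus :: "'w measure \<Rightarrow> ('w \<Rightarrow> int \<Rightarrow> 'j \<Rightarrow> nat \<Rightarrow> ereal) \<Rightarrow> ('w \<Rightarrow> ereal) \<Rightarrow> 'w measure" where
  "Fplus M Psi U = vimage_algebra (space M)
     (\<lambda>w (x,i,k). if U w \<le> Psi w x i k then Psi w x i k else MInfty)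
     (Pi\<^sub>M UNIV (\<lambda>_. borel))"

definition Fwin :: "'w measure \<Rightarrow> ('w \<Rightarrow> int \<Rightarrow> 'j \<Rightarrow> nat \<Rightarrow> ereal) \<Rightarrow> nat \<Rightarrow> nat \<Rightarrow> 'w measure" where
  "Fwin M Psi am ap = vimage_algebra (space M)
     (\<lambda>w. restrict (\<lambda>(x,i,k). Psi w x i k) {(x,i,k). - int am \<le> x \<and> x \<le> int ap})
     (Pi\<^sub>M {(x,i,k). - int am \<le> x \<and> x \<le> int ap} (\<lambda>_. borel))"

definition coupling_time_amb ::
  "'w measure \<Rightarrow> ('j \<Rightarrow> int set) \<Rightarrow> ('j \<Rightarrow> (int \<Rightarrow> 's) set) \<Rightarrow> ('j \<Rightarrow> 's)
    \<Rightarrow> ('w \<Rightarrow> int \<Rightarrow> 'j \<Rightarrow> nat \<Rightarrow> ereal) \<Rightarrow> ('w \<Rightarrow> int \<Rightarrow> 'j \<Rightarrow> nat \<Rightarrow> bool) \<Rightarrow> ('w \<Rightarrow> real) \<Rightarrow> bool" where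
  "coupling_time_amb M A ell s Psi H T \<longleftrightarrow>
     T \<in> borel_measurable M \<and>
     (AE w in M. T w < 0) \<and>
     (AE w in M. finite {(x,i,k). H w x i k}) \<and>
     (AE w in M. \<forall>x i k. Psi w x i k < ereal (T w) \<longrightarrow> \<not> H w x i k) \<and>
     (\<forall>x i k. (\<lambda>w. H w x i k) \<in> measurable (Fplus M Psi (\<lambda>w. Psi w x i k)) (count_space UNIV)) \<and>
     (AE w in M. \<forall>t < T w. \<forall>xi xi'.
        (\<forall>x i k. (Perf A ell s (Psi w) xi t x i k \<and> H w x i k) = (Perf A ell s (Psi w) xi' t x i k \<and> H w x i k))
        \<longrightarrow> Phi A ell s (Psi w) xi t = Phi A ell s (Psi w) xi' t)"

definition width_bounded ::
  "'w measure \<Rightarrow> ('j \<Rightarrow> int set) \<Rightarrow> ('j \<Rightarrow> (int \<Rightarrow> 's) set) \<Rightarrow> ('j \<Rightarrow> 's)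
    \<Rightarrow> ('w \<Rightarrow> int \<Rightarrow> 'j \<Rightarrow> nat \<Rightarrow> ereal) \<Rightarrow> ('w \<Rightarrow> int \<Rightarrow> 'j \<Rightarrow> nat \<Rightarrow> bool) \<Rightarrow> ('w \<Rightarrow> real)
    \<Rightarrow> nat \<Rightarrow> nat \<Rightarrow> bool" where
  "width_bounded M A ell s Psi H T am ap \<longleftrightarrow>
     (\<forall>x i k. (\<lambda>w. H w x i k) \<in> measurable (Fwin M Psi am ap) (count_space UNIV)) \<and>
     (AE w in M. \<forall>x i k. H w x i k \<longrightarrow> (\<lambda>a. x + a) ` A i \<subseteq> {- int am .. int ap}) \<and>
     (\<exists>Theta :: 'w \<times> (int \<times> 'j \<times> nat \<Rightarrow> bool) \<Rightarrow> 's.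
        Theta \<in> measurable (Fwin M Psi am ap \<Otimes>\<^sub>M Pi\<^sub>M UNIV (\<lambda>_. count_space UNIV)) (count_space UNIV) \<and>
        (AE w in M. \<forall>t < T w. \<forall>xi.
           Phi A ell s (Psi w) xi t = Theta (w, \<lambda>(x,i,k). Perf A ell s (Psi w) xi t x i k \<and> H w x i k)))"

definition finite_width where
  "finite_width M A ell s Psi H T \<longleftrightarrow> (\<exists>am ap. width_bounded M A ell s Psi H T am ap)"

definition LambdaH ::
  "'w measure \<Rightarrow> ('j \<Rightarrow> int set) \<Rightarrow> ('w \<Rightarrow> int \<Rightarrow> 'j \<Rightarrow> nat \<Rightarrow> ereal) \<Rightarrow> ('w \<Rightarrow> int \<Rightarrow> 'j \<Rightarrow> nat \<Rightarrow> bool)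
    \<Rightarrow> real \<Rightarrow> ennreal" where
  "LambdaH M A Psi H lam =
     (\<integral>\<^sup>+ w. (\<integral>\<^sup>+ p. (case p of (x,i,k) \<Rightarrow>
         of_nat (card (A i)) * ennreal (exp (- lam * real_of_ereal (Psi w x i k))) * (if H w x i k then 1 else 0))
       \<partial>count_space UNIV) \<partial>M)"

end

theory Submission
  imports Defs
begin

lemma count_slice:
  fixes g :: "nat \<Rightarrow> ennreal"
  shows "(\<integral>\<^sup>+p. (case p of (x,i,k) \<Rightarrow> if x = x0 \<and> i = i0 then g k else 0) \<partial>count_space UNIV) = (\<Sum>k. g k)"
proof -
  have "(\<integral>\<^sup>+p. (case p of (x,i,k) \<Rightarrow> if x = x0 \<and> i = i0 then g k else 0) \<partial>count_space UNIV)
     = (\<integral>\<^sup>+p. (case p of (x,i,k) \<Rightarrow> if x = x0 \<and> i = i0 then g k else 0) \<partial>count_space (range (\<lambda>k. (x0,i0,k))))"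
    by (rule nn_integral_count_space_eq) auto
  also have "\<dots> = (\<integral>\<^sup>+k. (case (x0,i0,k) of (x,i,k) \<Rightarrow> if x = x0 \<and> i = i0 then g k else 0) \<partial>count_space UNIV)"
    by (rule nn_integral_bij_count_space[symmetric]) (auto simp: bij_betw_def inj_on_def)
  also have "\<dots> = (\<Sum>k. g k)" by (simp add: nn_integral_count_space_nat)
  finally show ?thesis .
qed

lemma key_real:
  fixes mu lam S tau c :: real
  assumes "0 \<le> mu" "mu < lam" "0 \<le> S" "S \<le> tau" "0 < c"
  shows "exp (mu * tau) \<le> exp (lam * tau) * exp (- (lam - mu) * c) ^ k + exp (- S) * exp ((mu + 1) * c) ^ k"
proof -
  have e1: "exp (- (lam - mu) * c) ^ k = exp (real k * (- (lam - mu) * c))" by (simp add: exp_of_nat_mult)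
  have e2: "exp ((mu + 1) * c) ^ k = exp (real k * ((mu + 1) * c))" by (simp add: exp_of_nat_mult)
  show ?thesis
  proof (cases "c * real k \<le> tau")
    case True
    have "mu * tau \<le> lam * tau + real k * (- (lam - mu) * c)"
    proof -
      have "(lam - mu) * (c * real k) \<le> (lam - mu) * tau" using True assms by (intro mult_left_mono) auto
      then show ?thesis by (simp add: algebra_simps)
    qed
    moreover have "exp (lam * tau) * exp (- (lam - mu) * c) ^ k = exp (lam * tau + real k * (- (lam - mu) * c))"
      by (simp only: exp_of_nat_mult[symmetric] exp_add)
    ultimately have "exp (mu * tau) \<le> exp (lam * tau) * exp (- (lam - mu) * c) ^ k"
      by simp
    then show ?thesis by (smt (verit) exp_gt_zero mult_nonneg_nonneg zero_le_power)
  next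
    case False
    have "mu * tau \<le> mu * (c * real k)" using False assms by (intro mult_left_mono) auto
    moreover have "mu * (c * real k) \<le> - S + real k * ((mu + 1) * c)" using False assms
      by (simp add: algebra_simps)
    moreover have "exp (- S) * exp ((mu + 1) * c) ^ k = exp (- S + real k * ((mu + 1) * c))"
      by (simp only: exp_of_nat_mult[symmetric] exp_add)
    ultimately have "exp (mu * tau) \<le> exp (- S) * exp ((mu + 1) * c) ^ k"
      by simp
    then show ?thesis by (smt (verit) exp_gt_zero mult_nonneg_nonneg zero_le_power)
  qed
qed

lemma (in prob_space) exp_pos_AE:
  assumes D: "distributed M lborel X (exponential_density l)" and l: "0 < l"
  shows "AE w in M. 0 < X w"
proof -
  have Xm[measurable]: "X \<in> borel_measurable M" using distributed_measurable[OF D] by simp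
  have "prob {w\<in>space M. X w \<le> 0} = 0" using exponential_distributedD_le[OF D order_refl l] by simp
  then show ?thesis
    by (intro AE_I[where N="{w\<in>space M. X w \<le> 0}"]) (auto simp: emeasure_eq_measure)
qed

lemma (in prob_space) exp_neg_bound:
  assumes D: "distributed M lborel X (exponential_density l)" and l: "0 < l"
  shows "(\<integral>\<^sup>+w. ennreal (exp (- X w)) \<partial>M) \<le> ennreal (1 - exp (- l) * (1 - exp (-1)))"
proof -
  have Xm[measurable]: "X \<in> borel_measurable M" using distributed_measurable[OF D] by simp
  have pos: "AE w in M. 0 < X w" by (rule exp_pos_AE[OF D l])
  have "AE w in M. ennreal (exp (- X w)) \<le> indicator {w\<in>space M. X w \<le> 1} w + ennreal (exp (-1)) * indicator {w\<in>space M. 1 < X w} w"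
    using pos AE_space by eventually_elim (auto split: split_indicator)
  then have "(\<integral>\<^sup>+w. ennreal (exp (- X w)) \<partial>M) \<le> (\<integral>\<^sup>+w. indicator {w\<in>space M. X w \<le> 1} w + ennreal (exp (-1)) * indicator {w\<in>space M. 1 < X w} w \<partial>M)"
    by (rule nn_integral_mono_AE)
  also have "\<dots> = emeasure M {w\<in>space M. X w \<le> 1} + ennreal (exp (-1)) * emeasure M {w\<in>space M. 1 < X w}"
    by (simp add: nn_integral_add nn_integral_cmult)
  also have "\<dots> = ennreal (1 - exp (- l)) + ennreal (exp (-1)) * ennreal (exp (- l))"
    using exponential_distributedD_le[OF D _ l, of 1] exponential_distributedD_gt[OF D _ l, of 1]
    by (simp add: emeasure_eq_measure)
  also have "\<dots> = ennreal (1 - exp (- l) * (1 - exp (-1)))"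
    using l by (simp add: ennreal_mult[symmetric] ennreal_plus[symmetric] algebra_simps del: ennreal_plus)
  finally show ?thesis .
qed

lemma rho_bounds:
  fixes r :: real
  assumes "0 < r"
  shows "0 < 1 - exp (- r) * (1 - exp (-1)) \<and> 1 - exp (- r) * (1 - exp (-1)) < 1"
proof -
  have a: "0 < exp (- r)" "exp (- r) < 1" using assms by auto
  have b: "0 < 1 - exp (-1::real)" "1 - exp (-1::real) < 1" by auto
  have "exp (- r) * (1 - exp (-1)) < 1 * 1" using a b by (intro mult_strict_mono) auto
  moreover have "0 < exp (- r) * (1 - exp (-1))" using a b by simp
  ultimately show ?thesis by simp
qed

lemma (in prob_space) exp_sum_bound:
  fixes G :: "'a \<Rightarrow> int \<Rightarrow> 'j \<Rightarrow> nat \<Rightarrow> real"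
  assumes ind: "indep_vars (\<lambda>_. borel) (\<lambda>(x,i,k) w. G w x i k) {(x,i,k). r i > 0}"
  and D: "\<forall>x i k. r i > 0 \<longrightarrow> distributed M lborel (\<lambda>w. G w x i k) (exponential_density (r i))"
  and ri: "r i > 0"
  shows "(\<integral>\<^sup>+w. ennreal (exp (- (\<Sum>m\<le>k. G w x i m))) \<partial>M) \<le> ennreal ((1 - exp (- r i) * (1 - exp (-1))) ^ Suc k)"
proof -
  define I where "I = (\<lambda>m. (x,i,m)) ` {..k}"
  have inj: "inj_on (\<lambda>m. (x,i,m)) {..k}" by (auto simp: inj_on_def)
  have "indep_vars (\<lambda>_. borel) (\<lambda>(x,i,k) w. G w x i k) I"
    by (rule indep_vars_subset[OF ind]) (auto simp: I_def ri)
  then have indI: "indep_vars (\<lambda>_. borel) (\<lambda>p w. ennreal (exp (- ((\<lambda>(x,i,k) w. G w x i k) p w)))) I"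
    by (rule indep_vars_compose2[where Y="\<lambda>_ g. ennreal (exp (- g))"]) auto
  have "(\<integral>\<^sup>+w. ennreal (exp (- (\<Sum>m\<le>k. G w x i m))) \<partial>M)
      = (\<integral>\<^sup>+w. (\<Prod>p\<in>I. ennreal (exp (- ((\<lambda>(x,i,k) w. G w x i k) p w)))) \<partial>M)"
  proof (rule nn_integral_cong)
    fix w
    have "ennreal (exp (- (\<Sum>m\<le>k. G w x i m))) = ennreal (\<Prod>m\<le>k. exp (- G w x i m))"
      by (simp add: exp_sum[symmetric] sum_negf)
    also have "\<dots> = (\<Prod>m\<le>k. ennreal (exp (- G w x i m)))"
      by (simp add: prod_ennreal)
    also have "\<dots> = (\<Prod>p\<in>I. ennreal (exp (- ((\<lambda>(x,i,k) w. G w x i k) p w))))"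
      unfolding I_def by (simp add: prod.reindex[OF inj])
    finally show "ennreal (exp (- (\<Sum>m\<le>k. G w x i m))) = (\<Prod>p\<in>I. ennreal (exp (- ((\<lambda>(x,i,k) w. G w x i k) p w))))" .
  qed
  also have "\<dots> = (\<Prod>p\<in>I. \<integral>\<^sup>+w. ennreal (exp (- ((\<lambda>(x,i,k) w. G w x i k) p w))) \<partial>M)"
    by (rule indep_vars_nn_integral[OF _ indI]) (auto simp: I_def)
  also have "\<dots> = (\<Prod>m\<le>k. \<integral>\<^sup>+w. ennreal (exp (- G w x i m)) \<partial>M)"
    unfolding I_def by (simp add: prod.reindex[OF inj])
  also have "\<dots> \<le> (\<Prod>m\<le>k. ennreal (1 - exp (- r i) * (1 - exp (-1))))"
    by (intro prod_mono_ennreal exp_neg_bound) (use D ri in auto)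
  also have "\<dots> = ennreal (1 - exp (- r i) * (1 - exp (-1))) ^ Suc k"
    by simp
  also have "\<dots> = ennreal ((1 - exp (- r i) * (1 - exp (-1))) ^ Suc k)"
    using rho_bounds[OF ri] by (intro ennreal_power) simp
  finally show ?thesis .
qed

lemma (in prob_space) process_sum_finite:
  fixes G :: "'a \<Rightarrow> int \<Rightarrow> 'j \<Rightarrow> nat \<Rightarrow> real"
  assumes ind: "indep_vars (\<lambda>_. borel) (\<lambda>(x,i,k) w. G w x i k) {(x,i,k). r i > 0}"
  and D: "\<forall>x i k. r i > 0 \<longrightarrow> distributed M lborel (\<lambda>w. G w x i k) (exponential_density (r i))"
  and ri: "r i > 0"
  and Tm[measurable]: "T \<in> borel_measurable M"
  and KT: "(\<integral>\<^sup>+ w. ennreal (exp (- lam * T w)) \<partial>M) < \<infinity>"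
  and mu: "0 \<le> mu" "mu < lam"
  shows "\<exists>c>0. (\<Sum>k. \<integral>\<^sup>+w. ennreal (exp (- lam * T w) * exp (- (lam - mu) * c) ^ k
                 + exp (- (\<Sum>m\<le>k. G w x i m)) * exp ((mu + 1) * c) ^ k) \<partial>M) < \<infinity>"
proof -
  define \<rho> where "\<rho> = 1 - exp (- r i) * (1 - exp (-1))"
  have rho: "0 < \<rho>" "\<rho> < 1" using rho_bounds[OF ri] by (auto simp: \<rho>_def)
  have lnr: "ln \<rho> < 0" using rho by simp
  define c where "c = - ln \<rho> / (2 * (mu + 1))"
  have c: "0 < c" using lnr mu unfolding c_def by (intro divide_pos_pos) auto
  define a where "a = exp (- (lam - mu) * c)"
  define b where "b = exp ((mu + 1) * c)"
  have a: "0 < a" "a < 1" using c mu by (auto simp: a_def mult_neg_pos)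
  have mc: "(mu + 1) * c = - ln \<rho> / 2"
  proof -
    have "mu + 1 \<noteq> 0" using mu by simp
    then show ?thesis unfolding c_def by (simp add: field_simps)
  qed
  have bval: "b = exp (- ln \<rho> / 2)" by (simp add: b_def mc)
  define q where "q = b * \<rho>"
  have qval: "q = exp (ln \<rho> / 2)"
  proof -
    have "q = exp (- ln \<rho> / 2) * exp (ln \<rho>)" using rho by (simp add: q_def bval)
    also have "\<dots> = exp (- ln \<rho> / 2 + ln \<rho>)" by (simp only: exp_add)
    also have "\<dots> = exp (ln \<rho> / 2)" by (intro arg_cong[where f=exp]) linarith
    finally show ?thesis .
  qed
  have q: "0 < q" "q < 1" using lnr by (auto simp: qval)
  have b0: "0 < b" by (simp add: b_def)
  obtain Kr where Kr: "0 \<le> Kr" "(\<integral>\<^sup>+ w. ennreal (exp (- lam * T w)) \<partial>M) = ennreal Kr"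
    using KT less_top_ennreal by (metis infinity_ennreal_def)
  have Gm[measurable]: "\<And>m. (\<lambda>w. G w x i m) \<in> borel_measurable M"
    using D ri distributed_measurable by (metis measurable_lborel1)
  define d where "d k = Kr * a ^ k + \<rho> * q ^ k" for k :: nat
  have dnn: "\<And>k. 0 \<le> d k" using Kr a rho q by (auto simp: d_def)
  have sumd: "summable d"
    unfolding d_def using a q
    by (intro summable_add summable_mult summable_geometric) auto
  have tm: "(\<integral>\<^sup>+w. ennreal (exp (- lam * T w) * a ^ k + exp (- (\<Sum>m\<le>k. G w x i m)) * b ^ k) \<partial>M)
        \<le> ennreal (d k)" for k
  proof -
    have "(\<integral>\<^sup>+w. ennreal (exp (- lam * T w) * a ^ k + exp (- (\<Sum>m\<le>k. G w x i m)) * b ^ k) \<partial>M)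
       = (\<integral>\<^sup>+w. ennreal (exp (- lam * T w)) * ennreal (a ^ k) + ennreal (exp (- (\<Sum>m\<le>k. G w x i m))) * ennreal (b ^ k) \<partial>M)"
      using a b0 by (intro nn_integral_cong) (simp add: ennreal_plus[symmetric] ennreal_mult[symmetric] del: ennreal_plus)
    also have "\<dots> = (\<integral>\<^sup>+ w. ennreal (exp (- lam * T w)) \<partial>M) * ennreal (a ^ k)
         + (\<integral>\<^sup>+w. ennreal (exp (- (\<Sum>m\<le>k. G w x i m))) \<partial>M) * ennreal (b ^ k)"
      by (simp add: nn_integral_add nn_integral_multc)
    also have "\<dots> \<le> ennreal Kr * ennreal (a ^ k) + ennreal (\<rho> ^ Suc k) * ennreal (b ^ k)"
      using exp_sum_bound[OF ind D ri, where k=k and x=x] Kr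
      by (intro add_mono mult_right_mono) (auto simp: \<rho>_def)
    also have "\<dots> = ennreal (d k)"
      using Kr a b0 rho by (simp add: d_def q_def power_mult_distrib ennreal_plus[symmetric] ennreal_mult[symmetric] del: ennreal_plus)
    finally show ?thesis .
  qed
  have "(\<Sum>k. \<integral>\<^sup>+w. ennreal (exp (- lam * T w) * a ^ k + exp (- (\<Sum>m\<le>k. G w x i m)) * b ^ k) \<partial>M)
      \<le> (\<Sum>k. ennreal (d k))"
    by (intro suminf_le summableI tm)
  also have "\<dots> = ennreal (\<Sum>k. d k)" by (rule suminf_ennreal2[OF dnn sumd])
  also have "\<dots> < \<infinity>" by simp
  finally show ?thesis using c unfolding a_def b_def by blast
qed

theorem lemma4p13:
  fixes M :: "'w measure"
    and G :: "'w \<Rightarrow> int \<Rightarrow> 'j::finite \<Rightarrow> nat \<Rightarrow> real"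
    and A :: "'j \<Rightarrow> int set"
    and ell :: "'j \<Rightarrow> (int \<Rightarrow> 's::finite) set"
    and s :: "'j \<Rightarrow> 's"
    and r :: "'j \<Rightarrow> real"
    and H :: "'w \<Rightarrow> int \<Rightarrow> 'j \<Rightarrow> nat \<Rightarrow> bool"
    and T :: "'w \<Rightarrow> real"
    and lam lam' :: real
  assumes "prob_space M"
    and "\<forall>i. finite (A i)"
    and "\<forall>i. ell i \<subseteq> extensional (A i)"
    and "\<forall>i. 0 \<le> r i"
    and "poisson_family M r G"
    and "coupling_time_amb M A ell s (pts r G) H T"
    and "finite_width M A ell s (pts r G) H T"
    and "0 < lam"
    and "(\<integral>\<^sup>+ w. ennreal (exp (- lam * T w)) \<partial>M) < \<infinity>"
    and "lam' < lam"
  shows "LambdaH M A (pts r G) H lam' < \<infinity>"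
proof -
  interpret P: prob_space M by fact
  have ind: "P.indep_vars (\<lambda>_. borel) (\<lambda>(x,i,k) w. G w x i k) {(x,i,k). r i > 0}"
    and D: "\<forall>x i k. r i > 0 \<longrightarrow> distributed M lborel (\<lambda>w. G w x i k) (exponential_density (r i))"
    using assms(5) by (auto simp: poisson_family_def)
  have Tm[measurable]: "T \<in> borel_measurable M"
    and AE_HT: "AE w in M. \<forall>x i k. pts r G w x i k < ereal (T w) \<longrightarrow> \<not> H w x i k"
    using assms(6) by (auto simp: coupling_time_amb_def)
  obtain am ap where "width_bounded M A ell s (pts r G) H T am ap"
    using assms(7) by (auto simp: finite_width_def)
  then have AE_win: "AE w in M. \<forall>x i k. H w x i k \<longrightarrow> (\<lambda>a. x + a) ` A i \<subseteq> {- int am .. int ap}"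
    by (auto simp: width_bounded_def)
  have Gpos': "AE w in M. \<forall>p. (case p of (x,i,k) \<Rightarrow> r i > 0 \<longrightarrow> 0 < G w x i k)"
  proof (subst AE_all_countable, intro allI)
    fix p :: "int \<times> 'j \<times> nat"
    obtain x i k where p: "p = (x,i,k)" by (cases p) auto
    show "AE w in M. (case p of (x,i,k) \<Rightarrow> r i > 0 \<longrightarrow> 0 < G w x i k)"
    proof (cases "r i > 0")
      case True
      then show ?thesis using P.exp_pos_AE[of "\<lambda>w. G w x i k" "r i"] D by (simp add: p)
    qed (simp add: p)
  qed
  have Gpos: "AE w in M. \<forall>x i k. r i > 0 \<longrightarrow> 0 \<le> G w x i k"
    using Gpos' by eventually_elim (auto, metis (mono_tags, lifting) case_prod_conv less_le)
  define mu where "mu = max lam' 0"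
  have mu: "0 \<le> mu" "mu < lam" using assms(8,10) by (auto simp: mu_def)
  define Q where "Q x i c = (0 < c \<and> (\<Sum>k. \<integral>\<^sup>+w. ennreal (exp (- lam * T w) * exp (- (lam - mu) * c) ^ k
                 + exp (- (\<Sum>m\<le>k. G w x i m)) * exp ((mu + 1) * c) ^ k) \<partial>M) < \<infinity>)" for x i c
  define cf where "cf x i = (SOME c. Q x i c)" for x i
  have cf: "Q x i (cf x i)" if "r i > 0" for x i
  proof -
    have "\<exists>c. Q x i c" using P.process_sum_finite[OF ind D that Tm assms(9) mu, of x] by (auto simp: Q_def)
    then show ?thesis unfolding cf_def by (rule someI_ex)
  qed
  define F where "F x i k w = ennreal (exp (- lam * T w) * exp (- (lam - mu) * cf x i) ^ k
                 + exp (- (\<Sum>m\<le>k. G w x i m)) * exp ((mu + 1) * cf x i) ^ k)" for x i k w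
  define W where "W = {(x,i). r i > 0 \<and> A i \<noteq> {} \<and> (\<lambda>a. x + a) ` A i \<subseteq> {- int am .. int ap}}"
  have finW: "finite W"
  proof (rule finite_subset)
    show "W \<subseteq> (\<Union>i. \<Union>a\<in>A i. {- int am - a .. int ap - a} \<times> {i})"
    proof
      fix z assume "z \<in> W"
      then obtain x i where z: "z = (x,i)" "A i \<noteq> {}" "(\<lambda>a. x + a) ` A i \<subseteq> {- int am .. int ap}"
        by (auto simp: W_def)
      then obtain a where "a \<in> A i" by auto
      then show "z \<in> (\<Union>i. \<Union>a\<in>A i. {- int am - a .. int ap - a} \<times> {i})" using z by force
    qed
    show "finite (\<Union>i. \<Union>a\<in>A i. {- int am - a .. int ap - a} \<times> {i})"
      using assms(2) by auto
  qed
  define C where "C = Max (range (\<lambda>i. card (A i)))"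
  have cardC: "card (A i) \<le> C" for i unfolding C_def by (rule Max_ge) auto
  have ptw: "(\<integral>\<^sup>+ p. (case p of (x,i,k) \<Rightarrow>
         of_nat (card (A i)) * ennreal (exp (- lam' * real_of_ereal (pts r G w x i k))) * (if H w x i k then 1 else 0))
       \<partial>count_space UNIV) \<le> (\<Sum>z\<in>W. \<Sum>k. of_nat C * F (fst z) (snd z) k w)"
    if w1: "\<forall>x i k. pts r G w x i k < ereal (T w) \<longrightarrow> \<not> H w x i k"
      and w2: "\<forall>x i k. H w x i k \<longrightarrow> (\<lambda>a. x + a) ` A i \<subseteq> {- int am .. int ap}"
      and w3: "\<forall>x i k. r i > 0 \<longrightarrow> 0 \<le> G w x i k" for w
  proof -
    have "(\<integral>\<^sup>+ p. (case p of (x,i,k) \<Rightarrow>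
         of_nat (card (A i)) * ennreal (exp (- lam' * real_of_ereal (pts r G w x i k))) * (if H w x i k then 1 else 0))
       \<partial>count_space UNIV) \<le> (\<integral>\<^sup>+ p. (\<Sum>z\<in>W. (case p of (x,i,k) \<Rightarrow> if x = fst z \<and> i = snd z then of_nat C * F (fst z) (snd z) k w else 0)) \<partial>count_space UNIV)"
    proof (rule nn_integral_mono)
      fix p :: "int \<times> 'j \<times> nat"
      obtain x i k where p: "p = (x,i,k)" by (cases p) auto
      show "(case p of (x,i,k) \<Rightarrow>
         of_nat (card (A i)) * ennreal (exp (- lam' * real_of_ereal (pts r G w x i k))) * (if H w x i k then 1 else 0))
         \<le> (\<Sum>z\<in>W. (case p of (x,i,k) \<Rightarrow> if x = fst z \<and> i = snd z then of_nat C * F (fst z) (snd z) k w else 0))"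
      proof (cases "H w x i k \<and> A i \<noteq> {}")
        case False
        then show ?thesis by (auto simp: p)
      next
        case True
        then have HH: "H w x i k" and Ane: "A i \<noteq> {}" by auto
        have ri: "r i > 0"
        proof (rule ccontr)
          assume "\<not> r i > 0"
          then have "pts r G w x i k = MInfty" using assms(4) by (auto simp: pts_def less_le)
          then show False using w1 HH by force
        qed
        define S where "S = (\<Sum>m\<le>k. G w x i m)"
        have pS: "pts r G w x i k = ereal (- S)" using ri by (simp add: pts_def S_def)
        have S0: "0 \<le> S" unfolding S_def using w3 ri by (intro sum_nonneg) auto
        have ST: "S \<le> - T w" using w1 HH pS by force
        have zW: "(x,i) \<in> W" using ri Ane w2 HH by (auto simp: W_def)
        have c: "0 < cf x i" using cf[OF ri] by (simp add: Q_def)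
        have "exp (- lam' * real_of_ereal (pts r G w x i k)) = exp (lam' * S)" by (simp add: pS)
        also have "\<dots> \<le> exp (mu * S)" using S0 by (auto simp: mu_def intro!: mult_right_mono)
        also have "\<dots> \<le> exp (mu * (- T w))" using mult_left_mono[OF ST mu(1)] by simp
        also have "\<dots> \<le> exp (lam * (- T w)) * exp (- (lam - mu) * cf x i) ^ k + exp (- S) * exp ((mu + 1) * cf x i) ^ k"
          by (rule key_real[OF mu S0 ST c])
        finally have eb0: "exp (- lam' * real_of_ereal (pts r G w x i k)) \<le> exp (- lam * T w) * exp (- (lam - mu) * cf x i) ^ k
                 + exp (- (\<Sum>m\<le>k. G w x i m)) * exp ((mu + 1) * cf x i) ^ k"
          by (simp add: S_def)
        then have eb: "ennreal (exp (- lam' * real_of_ereal (pts r G w x i k))) \<le> F x i k w"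
          unfolding F_def by (rule ennreal_leI)
        have "of_nat (card (A i)) * ennreal (exp (- lam' * real_of_ereal (pts r G w x i k))) \<le> of_nat C * F x i k w"
          using cardC[of i] eb by (intro mult_mono) auto
        also have "\<dots> = (case p of (x',i',k') \<Rightarrow> if x' = fst (x,i) \<and> i' = snd (x,i) then of_nat C * F (fst (x,i)) (snd (x,i)) k' w else 0)"
          by (simp add: p)
        also have "\<dots> \<le> (\<Sum>z\<in>W. (case p of (x,i,k) \<Rightarrow> if x = fst z \<and> i = snd z then of_nat C * F (fst z) (snd z) k w else 0))"
          by (rule member_le_sum[OF zW _ finW]) auto
        finally show ?thesis using HH by (simp add: p)
      qed
    qed
    also have "\<dots> = (\<Sum>z\<in>W. \<integral>\<^sup>+ p. (case p of (x,i,k) \<Rightarrow> if x = fst z \<and> i = snd z then of_nat C * F (fst z) (snd z) k w else 0) \<partial>count_space UNIV)"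
      by (rule nn_integral_sum) simp
    also have "\<dots> = (\<Sum>z\<in>W. \<Sum>k. of_nat C * F (fst z) (snd z) k w)"
      by (simp add: count_slice)
    finally show ?thesis .
  qed
  have Gm[measurable]: "\<And>x i m. r i > 0 \<Longrightarrow> (\<lambda>w. G w x i m) \<in> borel_measurable M"
    using D distributed_measurable by (metis measurable_lborel1)
  have Fm[measurable]: "\<And>x i k. r i > 0 \<Longrightarrow> F x i k \<in> borel_measurable M"
    unfolding F_def by measurable
  have "LambdaH M A (pts r G) H lam' \<le> (\<integral>\<^sup>+ w. (\<Sum>z\<in>W. \<Sum>k. of_nat C * F (fst z) (snd z) k w) \<partial>M)"
    unfolding LambdaH_def
    apply (rule nn_integral_mono_AE)
    using AE_HT AE_win Gpos apply eventually_elim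
    apply (rule ptw)
    apply auto
    done
  also have "\<dots> = (\<Sum>z\<in>W. \<Sum>k. of_nat C * (\<integral>\<^sup>+ w. F (fst z) (snd z) k w \<partial>M))"
  proof -
    have "(\<integral>\<^sup>+ w. (\<Sum>z\<in>W. \<Sum>k. of_nat C * F (fst z) (snd z) k w) \<partial>M)
        = (\<Sum>z\<in>W. \<integral>\<^sup>+ w. (\<Sum>k. of_nat C * F (fst z) (snd z) k w) \<partial>M)"
      by (rule nn_integral_sum) (auto simp: W_def)
    also have "\<dots> = (\<Sum>z\<in>W. \<Sum>k. of_nat C * (\<integral>\<^sup>+ w. F (fst z) (snd z) k w \<partial>M))"
    proof (rule sum.cong[OF refl])
      fix z assume "z \<in> W"
      then have ri: "r (snd z) > 0" by (auto simp: W_def)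
      show "(\<integral>\<^sup>+ w. (\<Sum>k. of_nat C * F (fst z) (snd z) k w) \<partial>M) = (\<Sum>k. of_nat C * (\<integral>\<^sup>+ w. F (fst z) (snd z) k w \<partial>M))"
        using ri by (subst nn_integral_suminf) (auto simp: nn_integral_cmult)
    qed
    finally show ?thesis .
  qed
  also have "\<dots> < \<infinity>"
  proof -
    have "(\<Sum>k. of_nat C * (\<integral>\<^sup>+ w. F x i k w \<partial>M)) < \<infinity>" if "(x,i) \<in> W" for x i
    proof -
      have ri: "r i > 0" using that by (auto simp: W_def)
      have "(\<Sum>k. (\<integral>\<^sup>+ w. F x i k w \<partial>M)) < \<infinity>" using cf[OF ri] by (simp add: Q_def F_def)
      then show ?thesis by (simp add: ennreal_mult_less_top of_nat_less_top)
    qed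
    then show ?thesis using finW by (auto simp: top_unique)
  qed
  finally show ?thesis .
qed

end
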